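(* Let $M$ be a matroid on a finite set $E$, let $\mathcal{C}$ be a family of non-spanning circuits of $M$, and let $N$ be the free elevation of $M$. Suppose every cyclic flat of $M$ is a union of circuits in $\mathcal{C}$. Then every cyclic flat of $N$ is a union of circuits in $\mathcal{C}$.
   Context: A cyclic set is a union of circuits; $\emptyset$ counts as cyclic. $M$ is the truncation of $N$ if $r_N(E)=r_M(E)+1$ and $r_M(X)=\min\{r_N(X),r_M(E)\}$ for all $X$. The free erection of $M$ is the maximum, in the weak order, of the set consisting of $M$ and all $N$ whose truncation is $M$. The free elevation of $M$ is obtained by repeatedly taking non-trivial free erections until a matroid with no non-trivial erection is reached. *)

theory Defs
  imports Main
begin

text \<open>A matroid on the finite ground set E is given by its rank function r
  (only the values on subsets of E matter).\<close>

definition matroid :: "'a set \<Rightarrow> ('a set \<Rightarrow> nat) \<Rightarrow> bool" where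
  "matroid E r \<longleftrightarrow> finite E \<and>
     (\<forall>X. X \<subseteq> E \<longrightarrow> r X \<le> card X) \<and>
     (\<forall>X Y. X \<subseteq> Y \<and> Y \<subseteq> E \<longrightarrow> r X \<le> r Y) \<and>
     (\<forall>X Y. X \<subseteq> E \<and> Y \<subseteq> E \<longrightarrow> r (X \<union> Y) + r (X \<inter> Y) \<le> r X + r Y)"

definition indep :: "'a set \<Rightarrow> ('a set \<Rightarrow> nat) \<Rightarrow> 'a set \<Rightarrow> bool" where
  "indep E r X \<longleftrightarrow> X \<subseteq> E \<and> r X = card X"

definition circuit :: "'a set \<Rightarrow> ('a set \<Rightarrow> nat) \<Rightarrow> 'a set \<Rightarrow> bool" where
  "circuit E r C \<longleftrightarrow> C \<subseteq> E \<and> \<not> indep E r C \<and> (\<forall>D. D \<subset> C \<longrightarrow> indep E r D)"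

definition flat :: "'a set \<Rightarrow> ('a set \<Rightarrow> nat) \<Rightarrow> 'a set \<Rightarrow> bool" where
  "flat E r F \<longleftrightarrow> F \<subseteq> E \<and> (\<forall>x \<in> E - F. r F < r (insert x F))"

definition cyclic :: "'a set \<Rightarrow> ('a set \<Rightarrow> nat) \<Rightarrow> 'a set \<Rightarrow> bool" where
  "cyclic E r X \<longleftrightarrow> X \<subseteq> E \<and> (\<exists>\<C>. (\<forall>C\<in>\<C>. circuit E r C) \<and> X = \<Union>\<C>)"

definition cyclic_flat :: "'a set \<Rightarrow> ('a set \<Rightarrow> nat) \<Rightarrow> 'a set \<Rightarrow> bool" where
  "cyclic_flat E r F \<longleftrightarrow> cyclic E r F \<and> flat E r F"

definition is_truncation :: "'a set \<Rightarrow> ('a set \<Rightarrow> nat) \<Rightarrow> ('a set \<Rightarrow> nat) \<Rightarrow> bool" where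
  "is_truncation E rM rN \<longleftrightarrow> matroid E rM \<and> matroid E rN \<and>
     rN E = rM E + 1 \<and> (\<forall>X. X \<subseteq> E \<longrightarrow> rM X = min (rN X) (rM E))"

definition weak_le :: "'a set \<Rightarrow> ('a set \<Rightarrow> nat) \<Rightarrow> ('a set \<Rightarrow> nat) \<Rightarrow> bool" where
  "weak_le E rM rN \<longleftrightarrow> (\<forall>X. indep E rM X \<longrightarrow> indep E rN X)"

definition erections :: "'a set \<Rightarrow> ('a set \<Rightarrow> nat) \<Rightarrow> ('a set \<Rightarrow> nat) set" where
  "erections E rM = insert rM {rN. is_truncation E rM rN}"

definition is_free_erection :: "'a set \<Rightarrow> ('a set \<Rightarrow> nat) \<Rightarrow> ('a set \<Rightarrow> nat) \<Rightarrow> bool" where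
  "is_free_erection E rM rF \<longleftrightarrow> rF \<in> erections E rM \<and> (\<forall>rN \<in> erections E rM. weak_le E rN rF)"

text \<open>Free elevation: repeatedly take non-trivial free erections until a matroid
  with no non-trivial erection is reached. (An erection N of M with
  truncation M is automatically non-trivial, since r_N(E) = r_M(E)+1.)\<close>
inductive free_elevation :: "'a set \<Rightarrow> ('a set \<Rightarrow> nat) \<Rightarrow> ('a set \<Rightarrow> nat) \<Rightarrow> bool"
  for E where
  stop: "\<not> (\<exists>rN. is_truncation E rM rN) \<Longrightarrow> free_elevation E rM rM"
| step: "is_free_erection E rM rF \<Longrightarrow> is_truncation E rM rF \<Longrightarrow>
         free_elevation E rF rN \<Longrightarrow> free_elevation E rM rN"

end

theory Submission
  imports Defs
begin


lemma m_fin: "matroid E r \<Longrightarrow> finite E" by (simp add: matroid_def)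
lemma m_card: "matroid E r \<Longrightarrow> X \<subseteq> E \<Longrightarrow> r X \<le> card X" by (simp add: matroid_def)
lemma m_mono: "matroid E r \<Longrightarrow> X \<subseteq> Y \<Longrightarrow> Y \<subseteq> E \<Longrightarrow> r X \<le> r Y" by (simp add: matroid_def)
lemma m_sub: "matroid E r \<Longrightarrow> X \<subseteq> E \<Longrightarrow> Y \<subseteq> E \<Longrightarrow> r (X \<union> Y) + r (X \<inter> Y) \<le> r X + r Y"
  by (simp add: matroid_def)
lemma m_empty: "matroid E r \<Longrightarrow> r {} = 0"
  using m_card[of E r "{}"] by simp

lemma m_unit: assumes m: "matroid E r" and X: "X \<subseteq> E" and y: "y \<in> E"
  shows "r (insert y X) \<le> r X + 1"
proof (cases "y \<in> X")
  case True then show ?thesis by (simp add: insert_absorb)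
next
  case False
  have "r (X \<union> {y}) + r (X \<inter> {y}) \<le> r X + r {y}" using m_sub[OF m X, of "{y}"] y by simp
  moreover have "X \<inter> {y} = {}" using False by auto
  moreover have "r {y} \<le> 1" using m_card[OF m, of "{y}"] y by simp
  ultimately show ?thesis using m_empty[OF m] by simp
qed

lemma m_diff: assumes m: "matroid E r" and D: "D \<subseteq> E" and D': "D' \<subseteq> D"
  shows "r D \<le> r D' + card (D - D')"
proof -
  have "r (D' \<union> (D - D')) + r (D' \<inter> (D - D')) \<le> r D' + r (D - D')"
    using m_sub[OF m, of D' "D - D'"] D D' by blast
  moreover have "D' \<union> (D - D') = D" using D' by blast
  moreover have "r (D - D') \<le> card (D - D')" using m_card[OF m, of "D - D'"] D by blast
  ultimately show ?thesis by simp
qed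

lemma m_indep_sub: assumes m: "matroid E r" and D: "D \<subseteq> E" and i: "r D = card D" and D': "D' \<subseteq> D"
  shows "r D' = card D'"
proof -
  have fin: "finite D" using m_fin[OF m] D finite_subset by blast
  have "card D = card D' + card (D - D')" using fin D'
    by (metis card_Diff_subset card_mono finite_subset le_add_diff_inverse)
  moreover have "r D \<le> r D' + card (D - D')" using m_diff[OF m D D'] .
  moreover have "r D' \<le> card D'" using m_card[OF m] D D' by blast
  ultimately show ?thesis using i by linarith
qed

lemma m_basis: assumes m: "matroid E r" and S: "S \<subseteq> E"
  shows "\<exists>B\<subseteq>S. r B = card B \<and> r B = r S"
proof -
  have "finite S" using m_fin[OF m] S finite_subset by blast
  then show ?thesis using S
  proof (induction S rule: finite_induct)
    case empty then show ?case using m_empty[OF m] by auto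
  next
    case (insert e S')
    then obtain B' where B': "B' \<subseteq> S'" "r B' = card B'" "r B' = r S'" by auto
    have SE: "S' \<subseteq> E" "e \<in> E" using insert by auto
    show ?case
    proof (cases "r (insert e S') = r S'")
      case True then show ?thesis using B' by auto
    next
      case False
      have u: "r (insert e S') \<le> r S' + 1" using m_unit[OF m SE] .
      have mo: "r S' \<le> r (insert e S')" using m_mono[OF m, of S' "insert e S'"] SE by auto
      have BE: "B' \<subseteq> E" using B' SE by auto
      have ub: "r (insert e B') \<le> r B' + 1" using m_unit[OF m BE SE(2)] .
      have sb: "r (S' \<union> insert e B') + r (S' \<inter> insert e B') \<le> r S' + r (insert e B')"
        using m_sub[OF m, of S' "insert e B'"] SE BE by auto
      have "S' \<union> insert e B' = insert e S'" using B' by auto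
      moreover have "S' \<inter> insert e B' = B'" using B' insert by auto
      ultimately have sb2: "r (insert e S') + r B' \<le> r S' + r (insert e B')" using sb by simp
      have eq: "r (insert e B') = r B' + 1" using sb2 False u mo ub by linarith
      have "finite B'" using B' insert finite_subset by blast
      moreover have "e \<notin> B'" using B' insert by auto
      ultimately have "card (insert e B') = card B' + 1" by simp
      then show ?thesis using eq B' False u mo
        by (rule_tac x="insert e B'" in exI) auto
    qed
  qed
qed

lemma m_closure: assumes m: "matroid E r" and S: "S \<subseteq> E" and T: "finite T" "T \<subseteq> E"
  and h: "\<forall>y\<in>T. r (insert y S) = r S"
  shows "r (S \<union> T) = r S"
  using T h
proof (induction T rule: finite_induct)
  case empty then show ?case by simp
next
  case (insert y T)
  then have IH: "r (S \<union> T) = r S" and y: "y \<in> E" "r (insert y S) = r S" and TE: "T \<subseteq> E" by auto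
  have sb: "r ((S \<union> T) \<union> insert y S) + r ((S \<union> T) \<inter> insert y S) \<le> r (S \<union> T) + r (insert y S)"
    using m_sub[OF m, of "S \<union> T" "insert y S"] S TE y by auto
  have "r S \<le> r ((S \<union> T) \<inter> insert y S)"
    using m_mono[OF m, of S "(S \<union> T) \<inter> insert y S"] S TE y by auto
  moreover have "(S \<union> T) \<union> insert y S = S \<union> insert y T" by auto
  moreover have "r S \<le> r (S \<union> insert y T)" using m_mono[OF m, of S "S \<union> insert y T"] S TE y by auto
  ultimately have "r (S \<union> insert y T) \<le> r S" using sb IH y by simp
  then show ?case using \<open>r S \<le> r (S \<union> insert y T)\<close> by simp
qed

lemma m_span: assumes m: "matroid E r" and S: "S \<subseteq> Z" and Z: "Z \<subseteq> E" and y: "y \<in> E" "y \<notin> Z"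
  shows "r (insert y Z) + r S \<le> r (insert y S) + r Z"
proof -
  have "r (Z \<union> insert y S) + r (Z \<inter> insert y S) \<le> r Z + r (insert y S)"
    using m_sub[OF m, of Z "insert y S"] S Z y by auto
  moreover have "Z \<union> insert y S = insert y Z" using S by auto
  moreover have "Z \<inter> insert y S = S" using S y by auto
  ultimately show ?thesis by simp
qed



lemma m_circ_construct:
  assumes m: "matroid E r" and F: "F \<subseteq> E" and y: "y \<in> E" "y \<notin> F" and eq: "r (insert y F) = r F"
  shows "\<exists>D\<subseteq>F. r D = card D \<and> r (insert y D) = r D \<and> (\<forall>D'. D' \<subset> D \<longrightarrow> r (insert y D') = r D' + 1)"
proof -
  obtain B where B: "B \<subseteq> F" "r B = card B" "r B = r F" using m_basis[OF m F] by auto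
  have BE: "B \<subseteq> E" using B F by auto
  have "r (insert y B) \<le> r (insert y F)" using m_mono[OF m, of "insert y B" "insert y F"] B F y by auto
  moreover have "r B \<le> r (insert y B)" using m_mono[OF m, of B "insert y B"] BE y by auto
  ultimately have PB: "r (insert y B) = r B" using eq B by simp
  define P where "P D \<longleftrightarrow> D \<subseteq> B \<and> r (insert y D) = r D" for D
  have "P B" using PB P_def by simp
  then obtain D where PD: "P D" and minD: "\<And>D'. P D' \<Longrightarrow> card D \<le> card D'"
    using ex_has_least_nat[of P B card] by auto
  have DB: "D \<subseteq> B" and Dy: "r (insert y D) = r D" using PD P_def by auto
  have Di: "r D = card D" using m_indep_sub[OF m BE B(2) DB] .
  have finB: "finite B" using m_fin[OF m] BE finite_subset by blast
  have "\<forall>D'. D' \<subset> D \<longrightarrow> r (insert y D') = r D' + 1"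
  proof (intro allI impI)
    fix D' assume D': "D' \<subset> D"
    have "card D' < card D" using D' finB DB psubset_card_mono finite_subset by blast
    then have "\<not> P D'" using minD by force
    then have ne: "r (insert y D') \<noteq> r D'" using D' DB P_def by auto
    have D'E: "D' \<subseteq> E" using D' DB BE by auto
    have "r (insert y D') \<le> r D' + 1" using m_unit[OF m D'E y(1)] .
    moreover have "r D' \<le> r (insert y D')" using m_mono[OF m, of D' "insert y D'"] D'E y by auto
    ultimately show "r (insert y D') = r D' + 1" using ne by simp
  qed
  then show ?thesis using DB B Di Dy by (intro exI[of _ D]) auto
qed

lemma m_circuit_exists:
  assumes m: "matroid E r" and F: "F \<subseteq> E" and y: "y \<in> E" "y \<notin> F" and eq: "r (insert y F) = r F"
  shows "\<exists>C. circuit E r C \<and> y \<in> C \<and> C \<subseteq> insert y F"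
proof -
  obtain D where D: "D \<subseteq> F" "r D = card D" "r (insert y D) = r D"
    and mn: "\<forall>D'. D' \<subset> D \<longrightarrow> r (insert y D') = r D' + 1"
    using m_circ_construct[OF m F y eq] by blast
  have DE: "D \<subseteq> E" using D F by auto
  have finD: "finite D" using m_fin[OF m] DE finite_subset by blast
  have yD: "y \<notin> D" using D y by auto
  have "circuit E r (insert y D)"
    unfolding circuit_def indep_def
  proof (intro conjI allI impI)
    show "insert y D \<subseteq> E" using DE y by auto
    show "\<not> (insert y D \<subseteq> E \<and> r (insert y D) = card (insert y D))"
      using D finD yD by simp
  next
    fix T assume T: "T \<subset> insert y D"
    show "T \<subseteq> E" using T DE y by auto
    show "r T = card T"
    proof (cases "y \<in> T")
      case False
      then have "T \<subseteq> D" using T by auto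
      then show ?thesis using m_indep_sub[OF m DE D(2)] by blast
    next
      case True
      define T' where "T' = T - {y}"
      have T'D: "T' \<subset> D" using T True yD T'_def by auto
      have Teq: "T = insert y T'" using True T'_def by auto
      have "r T' = card T'" using m_indep_sub[OF m DE D(2)] T'D by blast
      moreover have "finite T'" using T'D finD finite_subset by blast
      moreover have "y \<notin> T'" using T'_def by auto
      ultimately show ?thesis using mn T'D Teq by simp
    qed
  qed
  then show ?thesis using D by auto
qed

lemma circuit_rank:
  assumes m: "matroid E r" and C: "circuit E r C" and y: "y \<in> C"
  shows "r (C - {y}) = r C"
proof -
  have CE: "C \<subseteq> E" using C unfolding circuit_def by blast
  have finC: "finite C" using m_fin[OF m] CE finite_subset by blast
  have "C - {y} \<subset> C" using y by auto
  then have "indep E r (C - {y})" using C unfolding circuit_def by blast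
  then have a: "r (C - {y}) = card C - 1" using finC y by (simp add: indep_def)
  have "\<not> indep E r C" using C unfolding circuit_def by blast
  then have "r C \<noteq> card C" using CE indep_def by auto
  moreover have "r C \<le> card C" using m_card[OF m CE] .
  moreover have "r (C - {y}) \<le> r C" using m_mono[OF m, of "C - {y}" C] CE by auto
  moreover have "card C \<ge> 1" using finC y card_0_eq by fastforce
  ultimately show ?thesis using a by linarith
qed

lemma cyclic_iff:
  assumes m: "matroid E r" and X: "X \<subseteq> E"
  shows "cyclic E r X \<longleftrightarrow> (\<forall>y\<in>X. r (X - {y}) = r X)"
proof
  assume "cyclic E r X"
  then obtain \<C> where Cc: "\<forall>C\<in>\<C>. circuit E r C" and XU: "X = \<Union>\<C>" unfolding cyclic_def by blast
  show "\<forall>y\<in>X. r (X - {y}) = r X"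
  proof
    fix y assume "y \<in> X"
    then obtain C where C: "C \<in> \<C>" "y \<in> C" using XU by auto
    have cc: "circuit E r C" using Cc C by auto
    have CX: "C \<subseteq> X" using XU C by auto
    have rc: "r (C - {y}) = r C" using circuit_rank[OF m cc C(2)] .
    have "r ((X - {y}) \<union> C) + r ((X - {y}) \<inter> C) \<le> r (X - {y}) + r C"
      using m_sub[OF m, of "X - {y}" C] X CX by auto
    moreover have "(X - {y}) \<union> C = X" using CX C by auto
    moreover have "(X - {y}) \<inter> C = C - {y}" using CX by auto
    ultimately have "r X \<le> r (X - {y})" using rc by simp
    moreover have "r (X - {y}) \<le> r X" using m_mono[OF m, of "X - {y}" X] X by auto
    ultimately show "r (X - {y}) = r X" by simp
  qed
next
  assume h: "\<forall>y\<in>X. r (X - {y}) = r X"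
  have "X = \<Union>{C. circuit E r C \<and> C \<subseteq> X}"
  proof
    show "X \<subseteq> \<Union>{C. circuit E r C \<and> C \<subseteq> X}"
    proof
      fix y assume yX: "y \<in> X"
      have "r (insert y (X - {y})) = r (X - {y})" using h yX by (simp add: insert_absorb)
      then obtain C where "circuit E r C" "y \<in> C" "C \<subseteq> insert y (X - {y})"
        using m_circuit_exists[OF m, of "X - {y}" y] X yX by auto
      then show "y \<in> \<Union>{C. circuit E r C \<and> C \<subseteq> X}" using yX by auto
    qed
  qed auto
  then show "cyclic E r X" unfolding cyclic_def using X by (intro conjI exI[of _ "{C. circuit E r C \<and> C \<subseteq> X}"]) auto
qed



lemma span_up:
  assumes m: "matroid E r" and Z: "Z \<subseteq> E" "flat E r Z" and S: "S \<subseteq> Z" "r S = r Z"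
    and T: "S \<subseteq> T" "T \<subseteq> E" "\<not> T \<subseteq> Z"
  shows "r T \<ge> r Z + 1"
proof -
  obtain y where y: "y \<in> T" "y \<notin> Z" using T by auto
  have yE: "y \<in> E" using y T by auto
  have "r (insert y Z) + r S \<le> r (insert y S) + r Z" using m_span[OF m S(1) Z(1) yE y(2)] .
  moreover have "r Z < r (insert y Z)" using Z(2) yE y unfolding flat_def by auto
  moreover have "r (insert y S) \<le> r T" using m_mono[OF m, of "insert y S" T] T y by auto
  ultimately show ?thesis using S by linarith
qed

lemma erect_matroid:
  assumes m: "matroid E r" and Z: "Z \<subseteq> E" "flat E r Z" "r Z = k" and rE: "r E = k + 1"
    and x: "x \<in> Z"
    and A: "\<forall>F. F \<subseteq> Z - {x} \<longrightarrow> r F < k \<longrightarrow> r (insert x F) = r F + 1"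
  shows "matroid E (\<lambda>X. r X + (if x \<in> X \<and> X \<subseteq> Z \<and> r (X - {x}) = k then 1 else 0))"
    (is "matroid E ?r")
proof -
  define sp where "sp X \<longleftrightarrow> x \<in> X \<and> X \<subseteq> Z \<and> r (X - {x}) = k" for X
  have rr: "?r X = r X + (if sp X then 1 else 0)" for X by (simp add: sp_def)
  have le_k: "X \<subseteq> Z \<Longrightarrow> r X \<le> k" for X using m_mono[OF m, of X Z] Z by auto
  have le_E: "X \<subseteq> E \<Longrightarrow> r X \<le> k + 1" for X using m_mono[OF m, of X E] rE by auto
  have spr: "sp X \<Longrightarrow> r X = k" for X
    using le_k[of X] m_mono[OF m, of "X - {x}" X] Z unfolding sp_def by auto
  have fin: "finite E" using m_fin[OF m] .
  have c1: "\<forall>X. X \<subseteq> E \<longrightarrow> ?r X \<le> card X"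
  proof (intro allI impI)
    fix X assume XE: "X \<subseteq> E"
    show "?r X \<le> card X"
    proof (cases "sp X")
      case True
      have "r (X - {x}) \<le> card (X - {x})" using m_card[OF m, of "X - {x}"] XE by auto
      moreover have "finite X" using fin XE finite_subset by blast
      moreover have "x \<in> X" using True unfolding sp_def by auto
      moreover have "card (X - {x}) + 1 = card X"
        using \<open>finite X\<close> \<open>x \<in> X\<close> by (metis card_Suc_Diff1 Suc_eq_plus1)
      ultimately have "k + 1 \<le> card X" using True unfolding sp_def by linarith
      then show ?thesis using True spr rr by simp
    next
      case False then show ?thesis using m_card[OF m XE] rr by simp
    qed
  qed
  have c2: "\<forall>X Y. X \<subseteq> Y \<and> Y \<subseteq> E \<longrightarrow> ?r X \<le> ?r Y"
  proof (intro allI impI)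
    fix X Y assume XY: "X \<subseteq> Y \<and> Y \<subseteq> E"
    have mo: "r X \<le> r Y" using m_mono[OF m] XY by auto
    show "?r X \<le> ?r Y"
    proof (cases "sp X \<and> \<not> sp Y")
      case True
      show ?thesis
      proof (cases "Y \<subseteq> Z")
        case True2: True
        have "r (X - {x}) \<le> r (Y - {x})" using m_mono[OF m, of "X - {x}" "Y - {x}"] XY by auto
        moreover have "r (Y - {x}) \<le> k" using le_k[of "Y - {x}"] True2 by auto
        ultimately have "sp Y" using True True2 XY unfolding sp_def by auto
        then show ?thesis using True by simp
      next
        case False
        have "r Y \<ge> r Z + 1"
          using span_up[OF m Z(1,2), of "X - {x}" Y] True XY False Z(3) unfolding sp_def by auto
        then show ?thesis using True rr spr[of X] Z(3) by simp
      qed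
    next
      case False then show ?thesis using mo rr by auto
    qed
  qed
  have c3: "\<forall>X Y. X \<subseteq> E \<and> Y \<subseteq> E \<longrightarrow> ?r (X \<union> Y) + ?r (X \<inter> Y) \<le> ?r X + ?r Y"
  proof (intro allI impI)
    fix X Y assume XY: "X \<subseteq> E \<and> Y \<subseteq> E"
    have sb: "r (X \<union> Y) + r (X \<inter> Y) \<le> r X + r Y" using m_sub[OF m] XY by auto
    show "?r (X \<union> Y) + ?r (X \<inter> Y) \<le> ?r X + ?r Y"
    proof (cases "sp (X \<inter> Y)")
      case True
      have S: "(X \<inter> Y) - {x} \<subseteq> Z" "r ((X \<inter> Y) - {x}) = r Z" using True Z(3) unfolding sp_def by auto
      have val: "?r T = k + 1" if T: "X \<inter> Y \<subseteq> T" "T \<subseteq> E" for T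
      proof (cases "T \<subseteq> Z")
        case True2: True
        have "r ((X \<inter> Y) - {x}) \<le> r (T - {x})" using m_mono[OF m, of "(X \<inter> Y) - {x}" "T - {x}"] T by auto
        moreover have "r (T - {x}) \<le> k" using le_k[of "T - {x}"] True2 by auto
        ultimately have "sp T" using True True2 T S Z(3) unfolding sp_def by auto
        then show ?thesis using spr rr by simp
      next
        case False
        have "r T \<ge> r Z + 1" using span_up[OF m Z(1,2) S] T False by auto
        moreover have "\<not> sp T" using False unfolding sp_def by auto
        ultimately show ?thesis using le_E[OF T(2)] Z(3) rr by simp
      qed
      have "?r X = k + 1" using val[of X] XY by blast
      moreover have "?r Y = k + 1" using val[of Y] XY by blast
      moreover have "?r (X \<union> Y) = k + 1" using val[of "X \<union> Y"] XY by blast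
      moreover have "?r (X \<inter> Y) = k + 1" using val[of "X \<inter> Y"] XY by blast
      ultimately show ?thesis by simp
    next
      case False
      show ?thesis
      proof (cases "sp (X \<union> Y) \<and> \<not> sp X \<and> \<not> sp Y")
        case True
        have XZ: "X \<subseteq> Z" "Y \<subseteq> Z" and xU: "x \<in> X \<union> Y" and rU: "r ((X \<union> Y) - {x}) = k"
          using True unfolding sp_def by auto
        have incX: "r W = r (W - {x}) + 1" if W: "x \<in> W" "W \<subseteq> Z" "\<not> sp W" for W
        proof -
          have "r (W - {x}) \<noteq> k" using W unfolding sp_def by auto
          moreover have "r (W - {x}) \<le> k" using le_k[of "W - {x}"] W by auto
          moreover have "W - {x} \<subseteq> Z - {x}" using W by auto
          ultimately have "r (insert x (W - {x})) = r (W - {x}) + 1"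
            using A[rule_format, of "W - {x}"] by linarith
          moreover have "insert x (W - {x}) = W" using W by auto
          ultimately show ?thesis by simp
        qed
        have XE: "X \<subseteq> E" "Y \<subseteq> E" using XY by auto
        have unit: "r (X \<inter> Y) \<le> r ((X \<inter> Y) - {x}) + 1"
        proof -
          have xE: "x \<in> E" using x Z(1) by auto
          have "r (insert x ((X \<inter> Y) - {x})) \<le> r ((X \<inter> Y) - {x}) + 1"
            using m_unit[OF m, of "(X \<inter> Y) - {x}" x] XE xE by blast
          moreover have "r (X \<inter> Y) \<le> r (insert x ((X \<inter> Y) - {x}))"
            using m_mono[OF m, of "X \<inter> Y" "insert x ((X \<inter> Y) - {x})"] XE xE by blast
          ultimately show ?thesis by linarith
        qed
        have main: "k + 1 + r (X \<inter> Y) \<le> r X + r Y"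
        proof (cases "x \<in> X")
          case xX: True
          show ?thesis
          proof (cases "x \<in> Y")
            case xY: True
            have "r ((X - {x}) \<union> (Y - {x})) + r ((X - {x}) \<inter> (Y - {x})) \<le> r (X - {x}) + r (Y - {x})"
              using m_sub[OF m, of "X - {x}" "Y - {x}"] XE by auto
            moreover have "(X - {x}) \<union> (Y - {x}) = (X \<union> Y) - {x}" by auto
            moreover have "(X - {x}) \<inter> (Y - {x}) = (X \<inter> Y) - {x}" by auto
            ultimately show ?thesis using incX[of X] incX[of Y] xX xY XZ True rU unit by simp
          next
            case xY: False
            have "r ((X - {x}) \<union> Y) + r ((X - {x}) \<inter> Y) \<le> r (X - {x}) + r Y"
              using m_sub[OF m, of "X - {x}" Y] XE by auto
            moreover have "(X - {x}) \<union> Y = (X \<union> Y) - {x}" using xY by auto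
            moreover have "(X - {x}) \<inter> Y = X \<inter> Y" using xY by auto
            ultimately show ?thesis using incX[of X] xX XZ True rU by simp
          qed
        next
          case xX: False
          then have xY: "x \<in> Y" using xU by auto
          have "r (X \<union> (Y - {x})) + r (X \<inter> (Y - {x})) \<le> r X + r (Y - {x})"
            using m_sub[OF m, of X "Y - {x}"] XE by auto
          moreover have "X \<union> (Y - {x}) = (X \<union> Y) - {x}" using xX by auto
          moreover have "X \<inter> (Y - {x}) = X \<inter> Y" using xX by auto
          ultimately show ?thesis using incX[of Y] xY XZ True rU by simp
        qed
        have "sp (X \<union> Y)" using True by simp
        then have "?r (X \<union> Y) = r (X \<union> Y) + 1" unfolding sp_def by simp
        moreover have "r (X \<union> Y) = k" using spr \<open>sp (X \<union> Y)\<close> by simp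
        moreover have "?r (X \<inter> Y) = r (X \<inter> Y)" using False unfolding sp_def by simp
        moreover have "?r X = r X" using True unfolding sp_def by simp
        moreover have "?r Y = r Y" using True unfolding sp_def by simp
        ultimately show ?thesis using main by simp
      next
        case False2: False
        have "(if sp (X \<union> Y) then 1 else 0) + (if sp (X \<inter> Y) then 1 else 0)
            \<le> (if sp X then 1 else (0::nat)) + (if sp Y then 1 else 0)" using False False2 by auto
        then show ?thesis using sb unfolding rr by linarith
      qed
    qed
  qed
  show ?thesis unfolding matroid_def by (rule conjI[OF fin conjI[OF c1 conjI[OF c2 c3]]])
qed



lemma trunc_circ:
  assumes tr: "is_truncation E rM rN" and C: "circuit E rM C" "rM C < rM E"
  shows "circuit E rN C \<and> rN C < rN E"
proof -
  have mM: "matroid E rM" and mN: "matroid E rN" and rNE: "rN E = rM E + 1"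
    and t: "\<forall>X. X \<subseteq> E \<longrightarrow> rM X = min (rN X) (rM E)" using tr unfolding is_truncation_def by blast+
  have CE: "C \<subseteq> E" using C unfolding circuit_def by blast
  have "rM C = min (rN C) (rM E)" using t CE by blast
  then have eq: "rN C = rM C" using C(2) by (simp add: min_def split: if_splits)
  have "circuit E rN C"
    unfolding circuit_def
  proof (intro conjI allI impI)
    show "C \<subseteq> E" using CE .
    show "\<not> indep E rN C" using C eq unfolding circuit_def indep_def by auto
  next
    fix D assume D: "D \<subset> C"
    then have "indep E rM D" using C unfolding circuit_def by blast
    then have "rM D = card D" "D \<subseteq> E" unfolding indep_def by auto
    moreover have "rN D \<le> card D" using m_card[OF mN] \<open>D \<subseteq> E\<close> by blast
    moreover have "rM D = min (rN D) (rM E)" using t \<open>D \<subseteq> E\<close> by blast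
    then have "rM D \<le> rN D" by simp
    ultimately show "indep E rN D" unfolding indep_def by simp
  qed
  then show ?thesis using eq C(2) rNE by simp
qed

lemma erection_step:
  assumes mM: "matroid E rM" and tr: "is_truncation E rM rN" and fr: "is_free_erection E rM rN"
    and hC: "\<forall>C\<in>\<C>. circuit E rM C \<and> rM C < rM E"
    and h4: "\<forall>F. cyclic_flat E rM F \<longrightarrow> F = \<Union>{C\<in>\<C>. C \<subseteq> F}"
  shows "\<forall>F. cyclic_flat E rN F \<longrightarrow> F = \<Union>{C\<in>\<C>. C \<subseteq> F}"
proof -
  define k where "k = rM E"
  have mN: "matroid E rN" and rNE: "rN E = k + 1"
    and t: "\<forall>X. X \<subseteq> E \<longrightarrow> rM X = min (rN X) k" using tr unfolding is_truncation_def k_def by blast+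
  have small: "cyclic_flat E rM W" if W: "cyclic_flat E rN W" "rN W < k \<or> W = E" for W
  proof -
    have WE: "W \<subseteq> E" using W unfolding cyclic_flat_def cyclic_def by auto
    have cN: "\<forall>y\<in>W. rN (W - {y}) = rN W" using W cyclic_iff[OF mN WE] unfolding cyclic_flat_def by auto
    have "\<forall>y\<in>W. rM (W - {y}) = rM W"
    proof
      fix y assume "y \<in> W"
      then show "rM (W - {y}) = rM W" using cN t WE by (metis Diff_subset order_trans)
    qed
    then have cM: "cyclic E rM W" using cyclic_iff[OF mM WE] by auto
    have "flat E rM W"
      unfolding flat_def
    proof (intro conjI ballI)
      show "W \<subseteq> E" using WE .
    next
      fix y assume y: "y \<in> E - W"
      then have "W \<noteq> E" by auto
      then have lt: "rN W < k" using W by auto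
      have "rN W < rN (insert y W)" using W y unfolding cyclic_flat_def flat_def by auto
      moreover have "rM W = rN W" using t WE lt by simp
      moreover have "rM (insert y W) = min (rN (insert y W)) k" using t WE y by simp
      ultimately show "rM W < rM (insert y W)" using lt by simp
    qed
    then show ?thesis using cM unfolding cyclic_flat_def by simp
  qed
  show ?thesis
  proof (intro allI impI)
    fix Z assume cf: "cyclic_flat E rN Z"
    have ZE: "Z \<subseteq> E" using cf unfolding cyclic_flat_def cyclic_def by auto
    have flZ: "flat E rN Z" using cf unfolding cyclic_flat_def by auto
    have cycZ: "\<forall>y\<in>Z. rN (Z - {y}) = rN Z" using cf cyclic_iff[OF mN ZE] unfolding cyclic_flat_def by auto
    show "Z = \<Union>{C\<in>\<C>. C \<subseteq> Z}"
    proof (cases "rN Z < k \<or> Z = E")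
      case True
      then show ?thesis using small[OF cf] h4 by blast
    next
      case False
      have "rN Z \<le> k + 1" using m_mono[OF mN ZE] rNE by auto
      moreover have "rN Z \<noteq> k + 1"
      proof
        assume a: "rN Z = k + 1"
        obtain y where "y \<in> E - Z" using False ZE by auto
        then have "rN Z < rN (insert y Z)" using flZ unfolding flat_def by auto
        moreover have "rN (insert y Z) \<le> k + 1" using m_mono[OF mN, of "insert y Z" E] rNE ZE \<open>y \<in> E - Z\<close> by auto
        ultimately show False using a by simp
      qed
      ultimately have rZ: "rN Z = k" using False by simp
      show ?thesis
      proof (rule ccontr)
        assume "Z \<noteq> \<Union>{C\<in>\<C>. C \<subseteq> Z}"
        then obtain x where xZ: "x \<in> Z" and xn: "x \<notin> \<Union>{C\<in>\<C>. C \<subseteq> Z}" by blast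
        have xE: "x \<in> E" using xZ ZE by auto
        have A: "\<forall>F. F \<subseteq> Z - {x} \<longrightarrow> rN F < k \<longrightarrow> rN (insert x F) = rN F + 1"
        proof (intro allI impI)
          fix F assume F: "F \<subseteq> Z - {x}" and Fk: "rN F < k"
          have FE: "F \<subseteq> E" using F ZE by auto
          have xF: "x \<notin> F" using F by auto
          show "rN (insert x F) = rN F + 1"
          proof (rule ccontr)
            assume ne: "rN (insert x F) \<noteq> rN F + 1"
            have "rN (insert x F) \<le> rN F + 1" using m_unit[OF mN FE xE] .
            moreover have "rN F \<le> rN (insert x F)" using m_mono[OF mN, of F "insert x F"] FE xE by auto
            ultimately have eq: "rN (insert x F) = rN F" using ne by simp
            obtain C where C: "circuit E rN C" "x \<in> C" "C \<subseteq> insert x F"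
              using m_circuit_exists[OF mN FE xE xF eq] by blast
            have CE: "C \<subseteq> E" using C FE xE by auto
            have CZ: "C \<subseteq> Z" using C F xZ by auto
            define W where "W = {y\<in>E. rN (insert y C) = rN C}"
            have CW: "C \<subseteq> W" unfolding W_def using CE by (auto simp: insert_absorb)
            have WE: "W \<subseteq> E" unfolding W_def by auto
            have "rN (C \<union> W) = rN C"
              using m_closure[OF mN CE finite_subset[OF WE m_fin[OF mN]] WE] unfolding W_def by blast
            then have rW: "rN W = rN C" using CW by (simp add: Un_absorb1)
            have "rN C \<le> rN (insert x F)" using m_mono[OF mN C(3)] FE xE by auto
            then have rCk: "rN C < k" using eq Fk by simp
            have flW: "flat E rN W"
              unfolding flat_def
            proof (intro conjI ballI)
              show "W \<subseteq> E" using WE .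
            next
              fix y assume y: "y \<in> E - W"
              then have n: "rN (insert y C) \<noteq> rN C" unfolding W_def by auto
              have "rN (insert y C) \<le> rN (insert y W)" using m_mono[OF mN, of "insert y C" "insert y W"] CW WE y by auto
              moreover have "rN C \<le> rN (insert y C)" using m_mono[OF mN, of C "insert y C"] CE y by auto
              ultimately show "rN W < rN (insert y W)" using n rW by simp
            qed
            have "\<forall>z\<in>W. rN (W - {z}) = rN W"
            proof
              fix z assume zW: "z \<in> W"
              have "rN C \<le> rN (W - {z})"
              proof (cases "z \<in> C")
                case True
                have "rN (C - {z}) \<le> rN (W - {z})" using m_mono[OF mN, of "C - {z}" "W - {z}"] CW WE by auto
                then show ?thesis using circuit_rank[OF mN C(1) True] by simp
              next
                case False
                then show ?thesis using m_mono[OF mN, of C "W - {z}"] CW WE by auto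
              qed
              moreover have "rN (W - {z}) \<le> rN W" using m_mono[OF mN, of "W - {z}" W] WE by auto
              ultimately show "rN (W - {z}) = rN W" using rW by simp
            qed
            then have "cyclic E rN W" using cyclic_iff[OF mN WE] by simp
            then have "cyclic_flat E rM W" using small flW rW rCk unfolding cyclic_flat_def by auto
            then have Wu: "W = \<Union>{C\<in>\<C>. C \<subseteq> W}" using h4 by blast
            have WZ: "W \<subseteq> Z"
            proof
              fix y assume yW: "y \<in> W"
              show "y \<in> Z"
              proof (rule ccontr)
                assume yZ: "y \<notin> Z"
                have yE: "y \<in> E" using yW WE by auto
                have "rN (insert y Z) + rN C \<le> rN (insert y C) + rN Z" using m_span[OF mN CZ ZE yE yZ] .
                moreover have "rN (insert y C) = rN C" using yW unfolding W_def by auto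
                moreover have "rN Z < rN (insert y Z)" using flZ yE yZ unfolding flat_def by auto
                ultimately show False by simp
              qed
            qed
            have "x \<in> W" using CW C(2) by auto
            then obtain C' where "C' \<in> \<C>" "C' \<subseteq> W" "x \<in> C'" using Wu by blast
            then show False using xn WZ by blast
          qed
        qed
        define r' where "r' = (\<lambda>X. rN X + (if x \<in> X \<and> X \<subseteq> Z \<and> rN (X - {x}) = k then 1 else 0))"
        have mr': "matroid E r'" unfolding r'_def using erect_matroid[OF mN ZE flZ rZ rNE xZ A] .
        have ZnE: "\<not> E \<subseteq> Z" using rZ rNE ZE by auto
        have "is_truncation E rM r'"
          unfolding is_truncation_def
        proof (intro conjI allI impI)
          show "matroid E rM" using mM .
          show "matroid E r'" using mr' .
          show "r' E = rM E + 1" using ZnE rNE k_def r'_def by simp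
        next
          fix X assume XE: "X \<subseteq> E"
          show "rM X = min (r' X) (rM E)"
          proof (cases "x \<in> X \<and> X \<subseteq> Z \<and> rN (X - {x}) = k")
            case True
            have "rN X \<le> k" using m_mono[OF mN, of X Z] True ZE rZ by auto
            moreover have "rN (X - {x}) \<le> rN X" using m_mono[OF mN, of "X - {x}" X] XE by auto
            ultimately have "rN X = k" using True by simp
            have tX: "rM X = min (rN X) k" using t XE by blast
            have "rM E = k" using k_def by simp
            then show ?thesis using True tX r'_def \<open>rN X = k\<close> by simp
          next
            case False
            have tX: "rM X = min (rN X) k" using t XE by blast
            have "rM E = k" using k_def by simp
            moreover have "r' X = rN X" using False unfolding r'_def by (simp only: if_False add_0_right if_not_P)
            ultimately show ?thesis using tX by simp
          qed
        qed
        then have "r' \<in> erections E rM" unfolding erections_def by simp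
        then have wl: "weak_le E r' rN" using fr unfolding is_free_erection_def by blast
        have ZxE: "Z - {x} \<subseteq> E" using ZE by auto
        obtain B where B: "B \<subseteq> Z - {x}" "rN B = card B" "rN B = rN (Z - {x})"
          using m_basis[OF mN ZxE] by blast
        have rB: "rN B = k" using B cycZ xZ rZ by simp
        define S where "S = insert x B"
        have SZ: "S \<subseteq> Z" using B xZ S_def by auto
        have SE: "S \<subseteq> E" using SZ ZE by auto
        have xB: "x \<notin> B" using B by auto
        have SxB: "S - {x} = B" using xB S_def by auto
        have "rN S \<le> rN Z" using m_mono[OF mN SZ ZE] .
        then have rSk: "rN S \<le> k" using rZ by linarith
        have BS: "B \<subseteq> S" unfolding S_def by blast
        have "rN B \<le> rN S" using m_mono[OF mN BS SE] .
        then have rS: "rN S = k" using rB rSk by linarith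
        have BE: "B \<subseteq> E" using B(1) ZE by blast
        have finB: "finite B" using finite_subset[OF BE m_fin[OF mN]] .
        have "card S = card B + 1" unfolding S_def using finB xB by simp
        then have cS: "card S = k + 1" using B(2) rB by linarith
        have xS: "x \<in> S" unfolding S_def by blast
        have spS: "x \<in> S \<and> S \<subseteq> Z \<and> rN (S - {x}) = k" using xS SZ SxB rB by simp
        have "r' S = rN S + 1" unfolding r'_def using spS by simp
        then have "r' S = k + 1" using rS by linarith
        then have "indep E r' S" using cS SE unfolding indep_def by simp
        then have "indep E rN S" using wl unfolding weak_le_def by blast
        then show False using rS cS unfolding indep_def by simp
      qed
    qed
  qed
qed

theorem lemma3p6:
  fixes E :: "'a set" and rM rN :: "'a set \<Rightarrow> nat" and \<C> :: "'a set set"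
  assumes "matroid E rM"
    and "\<forall>C\<in>\<C>. circuit E rM C \<and> rM C < rM E"
    and "free_elevation E rM rN"
    and "\<forall>F. cyclic_flat E rM F \<longrightarrow> F = \<Union>{C\<in>\<C>. C \<subseteq> F}"
  shows "\<forall>F. cyclic_flat E rN F \<longrightarrow> F = \<Union>{C\<in>\<C>. C \<subseteq> F}"
  using assms(3,1,2,4)
proof (induction rule: free_elevation.induct)
  case (stop rM)
  then show ?case by blast
next
  case (step rM rF rN)
  have mF: "matroid E rF" using step.hyps(2) unfolding is_truncation_def by simp
  have cF: "\<forall>C\<in>\<C>. circuit E rF C \<and> rF C < rF E"
  proof
    fix C assume c: "C \<in> \<C>"
    have "circuit E rM C" "rM C < rM E" using step.prems(2) c by auto
    then show "circuit E rF C \<and> rF C < rF E" by (rule trunc_circ[OF step.hyps(2)])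
  qed
  have hF: "\<forall>F. cyclic_flat E rF F \<longrightarrow> F = \<Union>{C\<in>\<C>. C \<subseteq> F}"
    using erection_step[OF step.prems(1) step.hyps(2) step.hyps(1) step.prems(2) step.prems(3)] .
  show ?case using step.IH[OF mF cF hF] .
qed

end
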